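(* Let $\Bbbk$ be an algebraically closed field and let $A=\Bbbk Q/I$ be a selfinjective algebra, where $Q$ is a finite quiver with vertices $1,\dots,r$ and $I\subseteq\Bbbk Q$ is an admissible ideal. Then for every $1\le i\le r$ there is an arrow in $\widetilde Q^+$ ending at vertex $i$.
   Context: $DA=\operatorname{Hom}_\Bbbk(A,\Bbbk)$ with its natural $A$-bimodule structure, and $T(A)=A\ltimes DA$ is the trivial extension, the vector space $A\oplus DA$ with multiplication $(a,f)(b,g)=(ab,ag+fb)$. Let $e_1,\dots,e_r$ be the primitive idempotents of $A$ corresponding to the vertices of $Q$, $A^{\mathrm e}=A\otimes_\Bbbk A^{\mathrm{op}}$, and $\operatorname{soc}_{A^{\mathrm e}}A$ the socle of $A$ as an $A$-bimodule. The quiver $\widetilde Q$ of $T(A)$ has the same vertices as $Q$ and its arrow set is $Q_1\cup\widetilde Q^+$, where $Q_1$ is the arrow set of $Q$ and $\widetilde Q^+$ is the set of new arrows, corresponding to the summand $D(\operatorname{soc}_{A^{\mathrm e}}A)$ of $\operatorname{rad}T(A)/\operatorname{rad}^2T(A)\cong\mathfrak r/\mathfrak r^2\oplus D(\operatorname{soc}_{A^{\mathrm e}}A)$ ($\mathfrak r$ the radical of $A$): the number of arrows of $\widetilde Q^+$ from vertex $i$ to vertex $j$ equals $\dim_\Bbbk e_j D(\operatorname{soc}_{A^{\mathrm e}}A) e_i$. *)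

theory Defs
  imports "HOL-Computational_Algebra.Polynomial" "HOL-Library.Function_Algebras"
begin

text \<open>A finite-dimensional associative unital algebra over a field: the ring
  structure is given by the type class ring_1 on 'a, the k-vector space
  structure by the scalar multiplication sc.\<close>

definition fd_algebra :: "('k::field \<Rightarrow> 'a::ring_1 \<Rightarrow> 'a) \<Rightarrow> bool" where
  "fd_algebra sc \<longleftrightarrow>
     vector_space sc \<and>
     (\<exists>B. finite B \<and> module.span sc B = UNIV) \<and>
     (\<forall>c x y. sc c (x * y) = sc c x * y \<and> sc c (x * y) = x * sc c y)"

definition idempotent :: "'a::ring_1 \<Rightarrow> bool" where
  "idempotent e \<longleftrightarrow> e * e = e"

definition primitive_idempotent :: "'a::ring_1 \<Rightarrow> bool" where
  "primitive_idempotent e \<longleftrightarrow> e \<noteq> 0 \<and> idempotent e \<and>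
     \<not> (\<exists>f g. idempotent f \<and> idempotent g \<and> f \<noteq> 0 \<and> g \<noteq> 0 \<and>
             f * g = 0 \<and> g * f = 0 \<and> e = f + g)"

definition complete_primitive_idempotents :: "(nat \<Rightarrow> 'a::ring_1) \<Rightarrow> nat \<Rightarrow> bool" where
  "complete_primitive_idempotents e r \<longleftrightarrow>
     (\<forall>i\<in>{1..r}. primitive_idempotent (e i)) \<and>
     (\<forall>i\<in>{1..r}. \<forall>j\<in>{1..r}. i \<noteq> j \<longrightarrow> e i * e j = 0) \<and>
     (\<Sum>i\<in>{1..r}. e i) = 1"

definition left_ideal_gen :: "'a::ring_1 \<Rightarrow> 'a set" where
  "left_ideal_gen e = {a * e | a. True}"

text \<open>Isomorphism of left A-modules A e and A f (A-linearity includes k-linearity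
  since k acts through A).\<close>
definition left_modules_iso ::
  "('k::field \<Rightarrow> 'a::ring_1 \<Rightarrow> 'a) \<Rightarrow> 'a set \<Rightarrow> 'a set \<Rightarrow> bool" where
  "left_modules_iso sc M N \<longleftrightarrow>
     (\<exists>\<phi>. bij_betw \<phi> M N \<and>
          (\<forall>x\<in>M. \<forall>y\<in>M. \<phi> (x + y) = \<phi> x + \<phi> y) \<and>
          (\<forall>a. \<forall>x\<in>M. \<phi> (a * x) = a * \<phi> x) \<and>
          (\<forall>c. \<forall>x\<in>M. \<phi> (sc c x) = sc c (\<phi> x)))"

definition basic_wrt :: "('k::field \<Rightarrow> 'a::ring_1 \<Rightarrow> 'a) \<Rightarrow> (nat \<Rightarrow> 'a) \<Rightarrow> nat \<Rightarrow> bool" where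
  "basic_wrt sc e r \<longleftrightarrow>
     (\<forall>i\<in>{1..r}. \<forall>j\<in>{1..r}. i \<noteq> j \<longrightarrow>
        \<not> left_modules_iso sc (left_ideal_gen (e i)) (left_ideal_gen (e j)))"

definition right_ideal :: "('k::field \<Rightarrow> 'a::ring_1 \<Rightarrow> 'a) \<Rightarrow> 'a set \<Rightarrow> bool" where
  "right_ideal sc J \<longleftrightarrow> 0 \<in> J \<and> (\<forall>x\<in>J. \<forall>y\<in>J. x + y \<in> J) \<and>
     (\<forall>x\<in>J. \<forall>a. x * a \<in> J) \<and> (\<forall>c. \<forall>x\<in>J. sc c x \<in> J)"

definition right_module_hom ::
  "('k::field \<Rightarrow> 'a::ring_1 \<Rightarrow> 'a) \<Rightarrow> 'a set \<Rightarrow> ('a \<Rightarrow> 'a) \<Rightarrow> bool" where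
  "right_module_hom sc J f \<longleftrightarrow>
     (\<forall>x\<in>J. \<forall>y\<in>J. f (x + y) = f x + f y) \<and>
     (\<forall>x\<in>J. \<forall>a. f (x * a) = f x * a) \<and>
     (\<forall>c. \<forall>x\<in>J. f (sc c x) = sc c (f x))"

text \<open>Selfinjective: the regular module A_A is injective; stated via Baer's
  criterion (every homomorphism from a right ideal into A_A extends to A).\<close>
definition selfinjective :: "('k::field \<Rightarrow> 'a::ring_1 \<Rightarrow> 'a) \<Rightarrow> bool" where
  "selfinjective sc \<longleftrightarrow>
     (\<forall>J f. right_ideal sc J \<and> right_module_hom sc J f \<longrightarrow>
        (\<exists>g. right_module_hom sc UNIV g \<and> (\<forall>x\<in>J. g x = f x)))"

definition subbimodule :: "('k::field \<Rightarrow> 'a::ring_1 \<Rightarrow> 'a) \<Rightarrow> 'a set \<Rightarrow> bool" where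
  "subbimodule sc M \<longleftrightarrow> 0 \<in> M \<and> (\<forall>x\<in>M. \<forall>y\<in>M. x + y \<in> M) \<and>
     (\<forall>c. \<forall>x\<in>M. sc c x \<in> M) \<and> (\<forall>a. \<forall>x\<in>M. a * x \<in> M \<and> x * a \<in> M)"

definition simple_subbimodule :: "('k::field \<Rightarrow> 'a::ring_1 \<Rightarrow> 'a) \<Rightarrow> 'a set \<Rightarrow> bool" where
  "simple_subbimodule sc M \<longleftrightarrow> subbimodule sc M \<and> M \<noteq> {0} \<and>
     (\<forall>N. subbimodule sc N \<and> N \<subseteq> M \<longrightarrow> N = {0} \<or> N = M)"

definition bimodule_socle :: "('k::field \<Rightarrow> 'a::ring_1 \<Rightarrow> 'a) \<Rightarrow> 'a set" where
  "bimodule_socle sc = module.span sc (\<Union>{M. simple_subbimodule sc M})"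

text \<open>The k-dual D(S) of a subspace S of A, realised as the k-linear functionals
  S \<rightarrow> k, extended by 0 outside S.\<close>
definition kdual :: "('k::field \<Rightarrow> 'a::ring_1 \<Rightarrow> 'a) \<Rightarrow> 'a set \<Rightarrow> ('a \<Rightarrow> 'k) set" where
  "kdual sc S = {f. (\<forall>x\<in>S. \<forall>y\<in>S. f (x + y) = f x + f y) \<and>
                    (\<forall>c. \<forall>x\<in>S. f (sc c x) = c * f x) \<and>
                    (\<forall>x. x \<notin> S \<longrightarrow> f x = 0)}"

definition dual_act :: "'a set \<Rightarrow> 'a::ring_1 \<Rightarrow> ('a \<Rightarrow> 'k::field) \<Rightarrow> 'a \<Rightarrow> ('a \<Rightarrow> 'k)" where
  "dual_act S a f b = (\<lambda>x. if x \<in> S then f (b * x * a) else 0)"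

definition corner_dual_socle ::
  "('k::field \<Rightarrow> 'a::ring_1 \<Rightarrow> 'a) \<Rightarrow> (nat \<Rightarrow> 'a) \<Rightarrow> nat \<Rightarrow> nat \<Rightarrow> ('a \<Rightarrow> 'k) set" where
  "corner_dual_socle sc e j i =
     (let S = bimodule_socle sc in (\<lambda>f. dual_act S (e j) f (e i)) ` kdual sc S)"

text \<open>Number of arrows of the new arrow set \<open>\<widetilde>Q\<^sup>+\<close> from vertex i to vertex j:
  dim_k e_j D(soc_{A^e} A) e_i.\<close>
definition num_new_arrows ::
  "('k::field \<Rightarrow> 'a::ring_1 \<Rightarrow> 'a) \<Rightarrow> (nat \<Rightarrow> 'a) \<Rightarrow> nat \<Rightarrow> nat \<Rightarrow> nat" where
  "num_new_arrows sc e i j =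
     vector_space.dim (\<lambda>(c::'k) (f::'a \<Rightarrow> 'k) x. c * f x) (corner_dual_socle sc e j i)"

end

theory Submission
  imports Defs
begin

lemma fd_vs: "fd_algebra sc \<Longrightarrow> vector_space sc"
  by (simp add: fd_algebra_def)

fun PL :: "'a::ring_1 \<Rightarrow> 'a list \<Rightarrow> 'a set" where
  "PL x [] = {0}"
| "PL x (a # as) = {a * x * t + p | t p. p \<in> PL x as}"

lemma PL_ConsI: "p \<in> PL x as \<Longrightarrow> a * x * t + p \<in> PL x (a # as)"
  by auto

lemma PL_0: "0 \<in> PL x as"
proof (induction as)
  case Nil then show ?case by simp
next
  case (Cons a as)
  have "a * x * 0 + 0 \<in> PL x (a # as)" by (rule PL_ConsI[OF Cons])
  then show ?case by simp
qed

lemma PL_mul: "p \<in> PL x as \<Longrightarrow> p * b \<in> PL x as"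
proof (induction as arbitrary: p)
  case Nil then show ?case by simp
next
  case (Cons a as)
  then obtain t q where h: "p = a * x * t + q" "q \<in> PL x as" by auto
  then have "p * b = a * x * (t * b) + q * b" by (simp add: algebra_simps)
  moreover have "q * b \<in> PL x as" using Cons.IH h(2) by blast
  ultimately show ?case by auto
qed

lemma PL_add: "p \<in> PL x as \<Longrightarrow> q \<in> PL x as \<Longrightarrow> p + q \<in> PL x as"
proof (induction as arbitrary: p q)
  case Nil then show ?case by simp
next
  case (Cons a as)
  then obtain t p' s q' where h: "p = a * x * t + p'" "p' \<in> PL x as" "q = a * x * s + q'" "q' \<in> PL x as"
    by auto
  then have "p + q = a * x * (t + s) + (p' + q')" by (simp add: algebra_simps)
  moreover have "p' + q' \<in> PL x as" using Cons.IH h by blast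
  ultimately show ?case by auto
qed

lemma PL_app: "p \<in> PL x as \<Longrightarrow> q \<in> PL x bs \<Longrightarrow> p + q \<in> PL x (as @ bs)"
proof (induction as arbitrary: p)
  case Nil then show ?case by simp
next
  case (Cons a as)
  then obtain t p' where h: "p = a * x * t + p'" "p' \<in> PL x as" by auto
  then have "p + q = a * x * t + (p' + q)" by (simp add: algebra_simps)
  moreover have "p' + q \<in> PL x (as @ bs)" using Cons.IH Cons.prems h by blast
  then have "a * x * t + (p' + q) \<in> PL x (a # (as @ bs))" by (rule PL_ConsI)
  ultimately show ?case by (simp only: append_Cons)
qed

lemma sum_fun_apply2: "(\<Sum>b\<in>A. f b) y = (\<Sum>b\<in>A. f b y)"
  for f :: "'b \<Rightarrow> 'a \<Rightarrow> 'c::comm_monoid_add"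
  by (induction A rule: infinite_finite_induct) auto

lemma fun_vs: "vector_space (\<lambda>(c::'k::field) (f::'a \<Rightarrow> 'k) y. c * f y)"
  by unfold_locales (auto simp: fun_eq_iff algebra_simps)

locale sialg =
  fixes sc :: "'k::field \<Rightarrow> 'a::ring_1 \<Rightarrow> 'a"
  assumes fd: "fd_algebra sc" and si: "selfinjective sc"
begin

interpretation vs: vector_space sc using fd by (simp add: fd_algebra_def)

lemma scl: "sc c x = sc c 1 * x"
  using fd unfolding fd_algebra_def by (metis mult_1_left)
lemma scr: "sc c x = x * sc c 1"
  using fd unfolding fd_algebra_def by (metis mult_1_right)
lemma sc_mult1: "sc c (x * y) = sc c x * y"
  using fd unfolding fd_algebra_def by metis
lemma sc_mult2: "sc c (x * y) = x * sc c y"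
  using fd unfolding fd_algebra_def by metis

definition FB where "FB = (SOME B. finite B \<and> vs.independent B \<and> vs.span B = UNIV)"

lemma FB: "finite FB \<and> vs.independent FB \<and> vs.span FB = UNIV"
proof -
  obtain B0 where B0: "finite B0" "vs.span B0 = UNIV" using fd unfolding fd_algebra_def by auto
  obtain B where B: "B \<subseteq> B0" "vs.independent B" "B0 \<subseteq> vs.span B"
    using vs.basis_exists[of B0] by metis
  have "vs.span B = UNIV" using B B0 by (metis top.extremum_uniqueI vs.span_minimal vs.subspace_span)
  moreover have "finite B" using B(1) B0(1) by (rule finite_subset)
  ultimately have "\<exists>B. finite B \<and> vs.independent B \<and> vs.span B = UNIV" using B by blast
  then show ?thesis unfolding FB_def by (rule someI_ex)
qed

sublocale fdv: finite_dimensional_vector_space sc FB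
  by unfold_locales (use FB in auto)

lemma rideal_subspace: "vs.subspace {x * a | a. True}"
proof -
  have "0 = x * 0" by simp
  moreover have "\<forall>p\<in>{x * a | a. True}. \<forall>q\<in>{x * a | a. True}. p + q \<in> {x * a | a. True}"
    by (auto, metis distrib_left)
  moreover have "\<forall>c. \<forall>p\<in>{x * a | a. True}. sc c p \<in> {x * a | a. True}"
    by (auto, metis sc_mult2)
  ultimately show ?thesis unfolding vs.subspace_def by blast
qed

definition minright :: "'a \<Rightarrow> bool" where
  "minright x \<longleftrightarrow> x \<noteq> 0 \<and> (\<forall>a. x * a \<noteq> 0 \<longrightarrow> (\<exists>b. x * a * b = x))"

lemma ex_minright:
  assumes "x0 \<in> X" "x0 \<noteq> 0" "\<forall>x\<in>X. \<forall>a. x * a \<in> X"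
  shows "\<exists>x\<in>X. minright x"
proof -
  let ?R = "\<lambda>y. {y * a | a. True}"
  obtain x where x: "x \<in> X \<and> x \<noteq> 0" and xmin: "\<forall>y. y \<in> X \<and> y \<noteq> 0 \<longrightarrow> vs.dim (?R x) \<le> vs.dim (?R y)"
    using ex_has_least_nat[of "\<lambda>y. y \<in> X \<and> y \<noteq> 0" x0 "\<lambda>y. vs.dim (?R y)"] assms by blast
  have "minright x" unfolding minright_def
  proof (intro conjI allI impI)
    show "x \<noteq> 0" using x by simp
    fix a assume xa: "x * a \<noteq> 0"
    have sub: "?R (x * a) \<subseteq> ?R x" by (auto, metis mult.assoc)
    have "x * a \<in> X" using assms x by auto
    then have "vs.dim (?R x) \<le> vs.dim (?R (x * a))" using xmin xa by auto
    then have "?R (x * a) = ?R x" using fdv.subspace_dim_equal[OF rideal_subspace rideal_subspace sub] by simp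
    moreover have "\<exists>a'. x = x * a'" by (rule exI[of _ 1]) simp
    ultimately have "x \<in> ?R (x * a)" by simp
    then obtain b where b: "x = x * a * b" by auto
    show "\<exists>b. x * a * b = x" by (rule exI[of _ b], rule sym, rule b)
  qed
  with x show ?thesis by blast
qed

lemma minright_mult: "minright x \<Longrightarrow> x * a \<noteq> 0 \<Longrightarrow> minright (x * a)"
  unfolding minright_def
proof (intro conjI allI impI)
  fix s assume h: "x \<noteq> 0 \<and> (\<forall>a. x * a \<noteq> 0 \<longrightarrow> (\<exists>b. x * a * b = x))" "x * a * s \<noteq> 0"
  then obtain b where "x * (a * s) * b = x" by (metis mult.assoc)
  then have "x * a * s * (b * a) = x * a" by (metis mult.assoc)
  then show "\<exists>b. x * a * s * b = x * a" by blast
qed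

lemma baer:
  fixes J :: "'a set" and f :: "'a \<Rightarrow> 'a"
  assumes J0: "0 \<in> J" and Jadd: "\<forall>x\<in>J. \<forall>y\<in>J. x + y \<in> J" and Jmul: "\<forall>x\<in>J. \<forall>a. x * a \<in> J"
    and fadd: "\<forall>x\<in>J. \<forall>y\<in>J. f (x + y) = f x + f y" and fmul: "\<forall>x\<in>J. \<forall>a. f (x * a) = f x * a"
  shows "\<exists>c. \<forall>x\<in>J. f x = c * x"
proof -
  have Jsc: "\<forall>c. \<forall>x\<in>J. sc c x \<in> J"
  proof (intro allI ballI)
    fix c x assume "x \<in> J"
    then have "x * sc c 1 \<in> J" using Jmul by blast
    then show "sc c x \<in> J" using scr[of c x] by simp
  qed
  have RI: "right_ideal sc J" unfolding right_ideal_def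
    by (rule conjI[OF J0 conjI[OF Jadd conjI[OF Jmul Jsc]]])
  have fsc: "\<forall>c. \<forall>x\<in>J. f (sc c x) = sc c (f x)"
  proof (intro allI ballI)
    fix c x assume "x \<in> J"
    then have "f (x * sc c 1) = f x * sc c 1" using fmul by blast
    then show "f (sc c x) = sc c (f x)" using scr[of c x] scr[of c "f x"] by simp
  qed
  have RH: "right_module_hom sc J f" unfolding right_module_hom_def
    by (rule conjI[OF fadd conjI[OF fmul fsc]])
  have "\<forall>J f. right_ideal sc J \<and> right_module_hom sc J f \<longrightarrow>
        (\<exists>g. right_module_hom sc UNIV g \<and> (\<forall>x\<in>J. g x = f x))"
    using si unfolding selfinjective_def .
  then have "\<exists>g. right_module_hom sc UNIV g \<and> (\<forall>x\<in>J. g x = f x)"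
    using RI RH by (elim allE impE) (rule conjI)
  then obtain g where g1: "right_module_hom sc UNIV g" and g2: "\<forall>x\<in>J. g x = f x" by blast
  have gm: "\<forall>x\<in>UNIV. \<forall>a. g (x * a) = g x * a" using g1 unfolding right_module_hom_def by (elim conjE)
  have gx: "g x = g 1 * x" for x :: 'a
  proof -
    have "g (1 * x) = g 1 * x" using gm by blast
    then show ?thesis by simp
  qed
  have "\<forall>x\<in>J. f x = g 1 * x"
  proof
    fix x assume "x \<in> J"
    then have "f x = g x" using g2 by simp
    also have "\<dots> = g 1 * x" by (rule gx)
    finally show "f x = g 1 * x" .
  qed
  then show ?thesis by (rule exI)
qed

lemma ann:
  fixes t t' :: 'a
  assumes "\<forall>a. t * a = 0 \<longrightarrow> t' * a = 0"
  shows "\<exists>c. c * t = t'"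
proof -
  define f where "f y = t' * (SOME a. y = t * a)" for y
  have fa: "f (t * a) = t' * a" for a
  proof -
    have "t * a = t * (SOME a'. t * a = t * a')" by (rule someI[of "\<lambda>a'. t * a = t * a'" a]) simp
    hence "t * (a - (SOME a'. t * a = t * a')) = 0" by (simp add: right_diff_distrib)
    hence "t' * (a - (SOME a'. t * a = t * a')) = 0" using assms by blast
    thus ?thesis unfolding f_def by (simp add: right_diff_distrib)
  qed
  let ?J = "{t * a | a. True}"
  have "\<exists>c. \<forall>x\<in>?J. f x = c * x"
  proof (rule baer)
    have "0 = t * 0" by simp
    then show "0 \<in> ?J" by blast
    show "\<forall>x\<in>?J. \<forall>y\<in>?J. x + y \<in> ?J"
    proof (intro ballI)
      fix x y assume "x \<in> ?J" "y \<in> ?J"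
      then obtain a b where "x = t * a" "y = t * b" by blast
      then have "x + y = t * (a + b)" by (simp add: distrib_left)
      then show "x + y \<in> ?J" by blast
    qed
    show "\<forall>x\<in>?J. \<forall>a. x * a \<in> ?J"
    proof (intro ballI allI)
      fix x c assume "x \<in> ?J"
      then obtain a where "x = t * a" by blast
      then have "x * c = t * (a * c)" by (simp add: mult.assoc)
      then show "x * c \<in> ?J" by blast
    qed
    show "\<forall>x\<in>?J. \<forall>y\<in>?J. f (x + y) = f x + f y"
    proof (intro ballI)
      fix x y assume "x \<in> ?J" "y \<in> ?J"
      then obtain a b where "x = t * a" "y = t * b" by blast
      then have e: "x + y = t * (a + b)" by (simp add: distrib_left)
      have "f (x + y) = t' * (a + b)" unfolding e by (rule fa)
      moreover have "f x = t' * a" "f y = t' * b" unfolding \<open>x = t * a\<close> \<open>y = t * b\<close> by (rule fa)+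
      ultimately show "f (x + y) = f x + f y" by (simp add: distrib_left)
    qed
    show "\<forall>x\<in>?J. \<forall>a. f (x * a) = f x * a"
    proof (intro ballI allI)
      fix x c assume "x \<in> ?J"
      then obtain a where "x = t * a" by blast
      then have e: "x * c = t * (a * c)" by (simp add: mult.assoc)
      have "f (x * c) = t' * (a * c)" unfolding e by (rule fa)
      moreover have "f x = t' * a" unfolding \<open>x = t * a\<close> by (rule fa)
      ultimately show "f (x * c) = f x * c" by (simp add: mult.assoc)
    qed
  qed
  then obtain c where "\<forall>x\<in>?J. f x = c * x" by blast
  hence "f (t * 1) = c * (t * 1)" by blast
  hence "c * t = t'" using fa[of 1] by simp
  thus ?thesis by blast
qed

lemma proj:
  fixes P :: "'a set"
  assumes P0: "0 \<in> P" and Padd: "\<forall>x\<in>P. \<forall>y\<in>P. x + y \<in> P" and Pmul: "\<forall>x\<in>P. \<forall>a. x * a \<in> P"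
    and disj: "\<forall>a. n * a \<in> P \<longrightarrow> n * a = 0"
  shows "\<exists>c. c * n = n \<and> (\<forall>p\<in>P. c * p = 0)"
proof -
  have Pneg: "\<forall>p\<in>P. - p \<in> P"
  proof
    fix p assume "p \<in> P"
    then have "p * (- 1) \<in> P" using Pmul by blast
    then show "- p \<in> P" by simp
  qed
  have uniq: "n * a = n * a'" if h: "n * a + p = n * a' + p'" "p \<in> P" "p' \<in> P" for a a' p p'
  proof -
    have "n * (a - a') = p' + (- p)" using h(1) by (simp add: right_diff_distrib algebra_simps)
    also have "\<dots> \<in> P" using Padd Pneg h by blast
    finally have "n * (a - a') = 0" using disj by blast
    thus ?thesis by (simp add: right_diff_distrib)
  qed
  define f where "f y = n * fst (SOME ap. y = n * fst ap + snd ap \<and> snd ap \<in> P)" for y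
  have fa: "f (n * a + p) = n * a" if p: "p \<in> P" for a p
  proof -
    let ?Q = "\<lambda>ap. n * a + p = n * fst ap + snd ap \<and> snd ap \<in> P"
    have "\<exists>ap. ?Q ap" using p by (intro exI[of _ "(a,p)"]) simp
    hence "?Q (SOME ap. ?Q ap)" by (rule someI_ex)
    then obtain ap where apd: "ap = (SOME ap. ?Q ap)" and q: "n * a + p = n * fst ap + snd ap" "snd ap \<in> P"
      by blast
    have "n * a = n * fst ap" by (rule uniq[OF q(1) p q(2)])
    moreover have "f (n * a + p) = n * fst ap" unfolding f_def apd by (rule refl)
    ultimately show ?thesis by simp
  qed
  let ?J = "{n * a + p | a p. p \<in> P}"
  have "\<exists>c. \<forall>x\<in>?J. f x = c * x"
  proof (rule baer)
    have "0 = n * 0 + 0" by simp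
    then show "0 \<in> ?J" using P0 by blast
    show "\<forall>x\<in>?J. \<forall>y\<in>?J. x + y \<in> ?J"
    proof (intro ballI)
      fix x y assume "x \<in> ?J" "y \<in> ?J"
      then obtain a p b q where h: "x = n * a + p" "y = n * b + q" "p \<in> P" "q \<in> P" by blast
      then have "x + y = n * (a + b) + (p + q)" "p + q \<in> P"
        using Padd by (simp_all add: algebra_simps)
      then show "x + y \<in> ?J" by blast
    qed
    show "\<forall>x\<in>?J. \<forall>a. x * a \<in> ?J"
    proof (intro ballI allI)
      fix x c assume "x \<in> ?J"
      then obtain a p where h: "x = n * a + p" "p \<in> P" by blast
      then have "x * c = n * (a * c) + p * c" "p * c \<in> P"
        using Pmul by (simp_all add: algebra_simps)
      then show "x * c \<in> ?J" by blast
    qed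
    show "\<forall>x\<in>?J. \<forall>y\<in>?J. f (x + y) = f x + f y"
    proof (intro ballI)
      fix x y assume "x \<in> ?J" "y \<in> ?J"
      then obtain a p b q where h: "x = n * a + p" "y = n * b + q" "p \<in> P" "q \<in> P" by blast
      then have e: "x + y = n * (a + b) + (p + q)" and pq: "p + q \<in> P"
        using Padd by (simp_all add: algebra_simps)
      have "f (x + y) = n * (a + b)" unfolding e by (rule fa[OF pq])
      moreover have "f x = n * a" "f y = n * b" unfolding h(1,2) by (rule fa[OF h(3)], rule fa[OF h(4)])
      ultimately show "f (x + y) = f x + f y" by (simp add: distrib_left)
    qed
    show "\<forall>x\<in>?J. \<forall>a. f (x * a) = f x * a"
    proof (intro ballI allI)
      fix x c assume "x \<in> ?J"
      then obtain a p where h: "x = n * a + p" "p \<in> P" by blast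
      then have e: "x * c = n * (a * c) + p * c" and pc: "p * c \<in> P"
        using Pmul by (simp_all add: algebra_simps)
      have "f (x * c) = n * (a * c)" unfolding e by (rule fa[OF pc])
      moreover have "f x = n * a" unfolding h(1) by (rule fa[OF h(2)])
      ultimately show "f (x * c) = f x * c" by (simp add: mult.assoc)
    qed
  qed
  then obtain c where c: "\<forall>x\<in>?J. f x = c * x" by blast
  have "n * 1 + 0 \<in> ?J" using P0 by blast
  hence "c * n = n" using c fa[OF P0, of 1] by simp
  moreover have "c * p = 0" if "p \<in> P" for p
  proof -
    have "n * 0 + p \<in> ?J" using that by blast
    thus ?thesis using c fa[OF that, of 0] by simp
  qed
  ultimately show ?thesis by blast
qed

lemma kernel_subspace: "vs.subspace {a. x * a = 0}"
  unfolding vs.subspace_def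
proof (intro conjI ballI allI)
  show "0 \<in> {a. x * a = 0}" by simp
  fix p q assume "p \<in> {a. x * a = 0}" "q \<in> {a. x * a = 0}"
  then show "p + q \<in> {a. x * a = 0}" by (simp add: distrib_left)
next
  fix c p assume "p \<in> {a. x * a = 0}"
  then have "x * sc c p = sc c (x * p)" by (simp only: sc_mult2)
  also have "\<dots> = sc c 0" using \<open>p \<in> {a. x * a = 0}\<close> by simp
  also have "\<dots> = 0" by simp
  finally show "sc c p \<in> {a. x * a = 0}" by simp
qed

lemma stab_dec:
  assumes sub: "\<And>n. vs.subspace (V n)" and dec: "\<And>n. V (Suc n) \<subseteq> V n"
  shows "\<exists>N. \<forall>m\<ge>N. V m = V N"
proof -
  obtain N where N: "\<forall>m. vs.dim (V N) \<le> vs.dim (V m)"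
    using ex_has_least_nat[of "\<lambda>_. True" 0 "\<lambda>n. vs.dim (V n)"] by auto
  have "V m = V N" if "m \<ge> N" for m
  proof -
    have "V m \<subseteq> V N" using dec that by (rule lift_Suc_antimono_le)
    then show ?thesis using fdv.subspace_dim_equal[OF sub sub, of m N] N by simp
  qed
  then show ?thesis by blast
qed

lemma stab_inc:
  assumes sub: "\<And>n. vs.subspace (V n)" and inc: "\<And>n. V n \<subseteq> V (Suc n)"
  shows "\<exists>N. \<forall>m\<ge>N. V m = V N"
proof -
  have bnd: "\<forall>y. True \<longrightarrow> vs.dim (V y) < fdv.dimension + 1"
    using fdv.dim_subset_UNIV by (simp add: le_imp_less_Suc)
  obtain N where N: "\<forall>m. vs.dim (V m) \<le> vs.dim (V N)"
    using ex_has_greatest_nat[of "\<lambda>_. True" 0 "\<lambda>n. vs.dim (V n)", OF _ bnd] by auto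
  have "V m = V N" if "m \<ge> N" for m
  proof -
    have "V N \<subseteq> V m" using inc that by (rule lift_Suc_mono_le)
    then show ?thesis using fdv.subspace_dim_equal[OF sub sub, of N m] N by simp
  qed
  then show ?thesis by blast
qed

lemma idem_pow:
  fixes e w :: 'a
  assumes ee: "e * e = e" and we: "w = e * w * e"
  shows "e * w ^ Suc m = w ^ Suc m" "w ^ Suc m * e = w ^ Suc m"
proof -
  have ew: "e * w = w" using ee we by (metis mult.assoc)
  have wer: "w * e = w" using ee we by (metis mult.assoc)
  show "e * w ^ Suc m = w ^ Suc m" by (simp only: power_Suc mult.assoc[symmetric] ew)
  show "w ^ Suc m * e = w ^ Suc m" by (simp only: power_Suc2 mult.assoc wer)
qed

lemma local_r:
  fixes e w :: 'a
  assumes prim: "primitive_idempotent e" and we: "w = e * w * e" and nn: "\<forall>n>0. w ^ n \<noteq> 0"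
  shows "\<exists>w'. w' = e * w' * e \<and> w * w' = e"
proof -
  have ee: "e * e = e" using prim unfolding primitive_idempotent_def idempotent_def by simp
  have ew: "e * w = w" using ee we by (metis mult.assoc)
  have wer: "w * e = w" using ee we by (metis mult.assoc)
  define Im where "Im n = {w ^ n * a | a. True}" for n
  define Ke where "Ke n = {a. w ^ n * a = 0}" for n
  have "\<exists>N. \<forall>m\<ge>N. Im m = Im N"
  proof (rule stab_dec[of Im])
    show "vs.subspace (Im n)" for n unfolding Im_def by (rule rideal_subspace)
    show "Im (Suc n) \<subseteq> Im n" for n
    proof
      fix y assume "y \<in> Im (Suc n)"
      then obtain a where "y = w ^ Suc n * a" unfolding Im_def by blast
      then have "y = w ^ n * w * a" by (simp only: power_Suc2)
      then have "y = w ^ n * (w * a)" by (simp only: mult.assoc)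
      then show "y \<in> Im n" unfolding Im_def by blast
    qed
  qed
  then obtain N1 where N1: "\<forall>m\<ge>N1. Im m = Im N1" by blast
  have "\<exists>N. \<forall>m\<ge>N. Ke m = Ke N"
  proof (rule stab_inc[of Ke])
    show "vs.subspace (Ke n)" for n unfolding Ke_def by (rule kernel_subspace)
    show "Ke n \<subseteq> Ke (Suc n)" for n unfolding Ke_def by (auto simp: power_Suc mult.assoc)
  qed
  then obtain N2 where N2: "\<forall>m\<ge>N2. Ke m = Ke N2" by blast
  define N where "N = N1 + N2"
  define n where "n = Suc N"
  have n0: "n > 0" unfolding n_def by simp
  have ImEq: "Im n = Im (n + n)" using N1 unfolding n_def N_def
    by (metis le_add1 add_Suc le_SucI trans_le_add1)
  have KeEq: "Ke n = Ke (n + n)" using N2 unfolding n_def N_def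
    by (metis le_add2 add_Suc le_SucI trans_le_add1 add.commute)
  have wn_e: "e * w ^ n = w ^ n" "w ^ n * e = w ^ n" "e * w ^ (n + n) = w ^ (n + n)" "w ^ (n + n) * e = w ^ (n + n)"
    using idem_pow[OF ee we] unfolding n_def by (simp_all only: add_Suc)
  have "w ^ n \<in> Im n" unfolding Im_def by (metis (mono_tags, lifting) mem_Collect_eq mult_1_right)
  then have "w ^ n \<in> Im (n + n)" using ImEq by simp
  then obtain y0 where y0: "w ^ n = w ^ (n + n) * y0" unfolding Im_def by blast
  define y where "y = e * y0 * e"
  have ye1: "y * e = y" unfolding y_def using ee by (simp add: mult.assoc)
  have ye2: "e * y = y" unfolding y_def using ee by (simp add: mult.assoc[symmetric])
  note ye = ye1 ye2
  have wy: "w ^ (n + n) * y = w ^ n"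
  proof -
    have "w ^ (n + n) * y = (w ^ (n + n) * e) * y0 * e" unfolding y_def by (simp add: mult.assoc)
    also have "\<dots> = w ^ n * e" using wn_e(4) y0 by simp
    also have "\<dots> = w ^ n" using wn_e(2) by simp
    finally show ?thesis .
  qed
  define i where "i = w ^ n * y"
  have wi: "w ^ n * i = w ^ n" unfolding i_def using wy by (simp add: power_add mult.assoc)
  have ie: "e * i = i" "i * e = i" unfolding i_def using wn_e(1) ye(1)
    by (simp_all add: mult.assoc[symmetric]) (simp add: mult.assoc)
  have ii: "i * i = i"
  proof -
    define u where "u = y - y * i"
    have z: "i - i * i = w ^ n * u" unfolding u_def i_def by (simp add: right_diff_distrib mult.assoc)
    have "w ^ n * (i - i * i) = w ^ n * i - w ^ n * i * i" by (simp add: right_diff_distrib mult.assoc)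
    also have "\<dots> = 0" using wi by simp
    finally have "w ^ (n + n) * u = 0" using z by (simp add: power_add mult.assoc)
    then have "u \<in> Ke (n + n)" unfolding Ke_def by simp
    then have "u \<in> Ke n" using KeEq by simp
    then have "w ^ n * u = 0" unfolding Ke_def by simp
    then show ?thesis using z by simp
  qed
  define k where "k = e - i"
  have kk: "k * k = k" unfolding k_def using ee ie ii by (simp add: algebra_simps)
  have ki: "k * i = 0" "i * k = 0" unfolding k_def using ie ii by (simp_all add: algebra_simps)
  have eki: "e = k + i" unfolding k_def by simp
  have "k = 0 \<or> i = 0"
    using prim kk ki eki ii unfolding primitive_idempotent_def idempotent_def by blast
  moreover have "i \<noteq> 0"
  proof
    assume "i = 0"
    then have "w ^ n = 0" using wi by simp
    then show False using nn n0 by blast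
  qed
  ultimately have ei: "e = i" using eki by simp
  define w' where "w' = e * w ^ N * y"
  have "w * w' = w ^ n * y" unfolding w'_def n_def by (simp add: mult.assoc[symmetric] wer)
  then have "w * w' = e" using ei unfolding i_def by simp
  moreover have "w' = e * w' * e"
  proof -
    have "e * w' * e = (e * e) * w ^ N * (y * e)" unfolding w'_def by (simp add: mult.assoc)
    also have "\<dots> = w'" unfolding w'_def using ee ye1 by simp
    finally show ?thesis by simp
  qed
  ultimately show ?thesis by blast
qed

lemma pow_fix: fixes w t :: 'a shows "w * t = t \<Longrightarrow> w ^ m * t = t"
  by (induction m) (simp_all add: mult.assoc)

lemma local2:
  fixes e w :: 'a
  assumes prim: "primitive_idempotent e" and we: "w = e * w * e" and nn: "\<forall>n>0. w ^ n \<noteq> 0"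
  shows "\<exists>w'. w' = e * w' * e \<and> w * w' = e \<and> w' * w = e"
proof -
  have ee: "e * e = e" and e0: "e \<noteq> 0" using prim unfolding primitive_idempotent_def idempotent_def by simp_all
  have wer: "w * e = w" using ee we by (metis mult.assoc)
  obtain w' where w': "w' = e * w' * e" "w * w' = e" using local_r[OF prim we nn] by blast
  have ew': "e * w' = w'" using ee w'(1) by (metis mult.assoc)
  have pw: "w ^ Suc m * w' ^ Suc m = e" for m
  proof (induction m)
    case 0 then show ?case using w' by simp
  next
    case (Suc m)
    have "w ^ Suc (Suc m) * w' ^ Suc (Suc m) = w * (w ^ Suc m * w' ^ Suc m) * w'"
      by (simp only: power_Suc[of w "Suc m"] power_Suc2[of w' "Suc m"] mult.assoc)
    also have "\<dots> = e" using Suc wer w'(2) by simp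
    finally show ?case .
  qed
  have "\<forall>n>0. w' ^ n \<noteq> 0"
  proof (intro allI impI notI)
    fix n :: nat assume "n > 0" "w' ^ n = 0"
    then obtain m where "n = Suc m" using gr0_implies_Suc by blast
    then show False using pw[of m] \<open>w' ^ n = 0\<close> e0 by simp
  qed
  then obtain w'' where w'': "w'' = e * w'' * e" "w' * w'' = e" using local_r[OF prim w'(1)] by blast
  have "w = w * (w' * w'')" using w''(2) wer by simp
  also have "\<dots> = e * w''" using w'(2) by (simp add: mult.assoc[symmetric])
  also have "\<dots> = w''" using ee w''(1) by (metis mult.assoc)
  finally have "w' * w = e" using w''(2) by simp
  then show ?thesis using w' by blast
qed

lemma prim_idem: "primitive_idempotent e \<Longrightarrow> e * e = e \<and> e \<noteq> 0"
  unfolding primitive_idempotent_def idempotent_def by simp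

lemma sandwich: fixes e x :: 'a shows "e * e = e \<Longrightarrow> e * (e * x * e) * e = e * x * e"
proof -
  assume ee: "e * e = e"
  have "e * (e * x * e) * e = (e * e) * x * (e * e)" by (simp add: mult.assoc)
  then show ?thesis using ee by simp
qed

lemma topeq:
  fixes e t t' :: 'a
  assumes prim: "primitive_idempotent e" and te: "t = t * e" and te': "t' = t' * e"
    and t0: "t \<noteq> 0" and mt': "minright t'"
  shows "\<forall>a. t * a = 0 \<longrightarrow> t' * a = 0"
proof (intro allI impI, rule ccontr)
  fix a assume ta: "t * a = 0" and t'a: "t' * a \<noteq> 0"
  have ee: "e * e = e" using prim_idem[OF prim] by simp
  obtain b where b: "t' * a * b = t'" using mt' t'a unfolding minright_def by blast
  define w where "w = e * (a * b) * e"
  have we: "w = e * w * e" unfolding w_def using sandwich[OF ee] by simp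
  have t'w: "t' * w = t'"
  proof -
    have "t' * w = (t' * e) * a * b * e" unfolding w_def by (simp add: mult.assoc)
    also have "\<dots> = t' * e" using te'[symmetric] b by simp
    also have "\<dots> = t'" using te' by simp
    finally show ?thesis .
  qed
  have tw: "t * w = 0"
  proof -
    have "t * w = (t * e) * a * b * e" unfolding w_def by (simp add: mult.assoc)
    also have "\<dots> = 0" using te[symmetric] ta by simp
    finally show ?thesis .
  qed
  have t'0: "t' \<noteq> 0" using mt' unfolding minright_def by simp
  have pw: "t' * w ^ m = t'" for m
    by (induction m) (simp_all add: power_Suc2 mult.assoc[symmetric] t'w)
  have "\<forall>n>0. w ^ n \<noteq> 0"
  proof (intro allI impI notI)
    fix n :: nat assume "w ^ n = 0"
    then show False using pw[of n] t'0 by simp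
  qed
  then obtain w' where w': "w * w' = e" using local2[OF prim we] by blast
  have "t = t * w * w'" using te w' by (simp add: mult.assoc)
  also have "\<dots> = 0" using tw by simp
  finally show False using t0 by simp
qed

lemma iso_from:
  fixes ej el t t' c d :: 'a
  assumes pj: "primitive_idempotent ej" and pl: "primitive_idempotent el"
    and t0: "t \<noteq> 0" and tj: "t = ej * t" and tl: "t' = el * t'" and ct: "c * t = t'" and dt: "d * t' = t"
  shows "\<exists>P Q. P = ej * P * el \<and> Q = el * Q * ej \<and> P * Q = ej \<and> Q * P = el"
proof -
  have ejj: "ej * ej = ej" using prim_idem[OF pj] by simp
  have ell: "el * el = el" using prim_idem[OF pl] by simp
  have t'0: "t' \<noteq> 0" using dt t0 by auto
  define g where "g = el * c * ej"
  define h where "h = ej * d * el"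
  have gt: "g * t = t'" unfolding g_def using tj tl ct by (metis mult.assoc)
  have ht: "h * t' = t" unfolding h_def using tj tl dt by (metis mult.assoc)
  define w where "w = h * g"
  have w2: "w = ej * (d * el * (el * c)) * ej" unfolding w_def h_def g_def by (simp add: mult.assoc)
  have we: "w = ej * w * ej" using sandwich[OF ejj] w2 by simp
  have wt: "w * t = t" unfolding w_def using gt ht by (simp add: mult.assoc)
  have "\<forall>n>0. w ^ n \<noteq> 0"
  proof (intro allI impI notI)
    fix n :: nat assume "w ^ n = 0"
    then show False using pow_fix[OF wt, of n] t0 by simp
  qed
  then obtain w' where w': "w' = ej * w' * ej" "w * w' = ej" "w' * w = ej" using local2[OF pj we] by blast
  define v where "v = g * h"
  have v2: "v = el * (c * ej * (ej * d)) * el" unfolding v_def h_def g_def by (simp add: mult.assoc)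
  have ve: "v = el * v * el" using sandwich[OF ell] v2 by simp
  have vt: "v * t' = t'" unfolding v_def using gt ht by (simp add: mult.assoc)
  have "\<forall>n>0. v ^ n \<noteq> 0"
  proof (intro allI impI notI)
    fix n :: nat assume "v ^ n = 0"
    then show False using pow_fix[OF vt, of n] t'0 by simp
  qed
  then obtain v' where v': "v * v' = el" using local2[OF pl ve] by blast
  define P where "P = w' * h"
  define Q where "Q = g"
  have ejw': "ej * w' = w'" using w'(1) ejj by (metis mult.assoc)
  have hel: "h * el = h" unfolding h_def using ell by (simp add: mult.assoc)
  have gej: "g * ej = g" unfolding g_def using ejj by (simp add: mult.assoc)
  have elg: "el * g = g" unfolding g_def using ell by (simp add: mult.assoc[symmetric])
  have P1: "P = ej * P * el"
  proof -
    have "ej * P * el = (ej * w') * (h * el)" unfolding P_def by (simp add: mult.assoc)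
    then show ?thesis using ejw' hel unfolding P_def by simp
  qed
  have Q1: "Q = el * Q * ej" unfolding Q_def using elg gej by simp
  have PQ: "P * Q = ej" unfolding P_def Q_def using w'(3) unfolding w_def by (simp add: mult.assoc)
  have QPv: "Q * P * v = v"
  proof -
    have "Q * P * v = g * (w' * w) * h" unfolding P_def Q_def v_def w_def by (simp add: mult.assoc)
    also have "\<dots> = g * h" using w'(3) gej by simp
    finally show ?thesis unfolding v_def .
  qed
  have "Q * P = Q * P * el" unfolding P_def using hel by (simp add: mult.assoc)
  also have "\<dots> = Q * P * v * v'" using v' by (simp add: mult.assoc)
  also have "\<dots> = el" using QPv v' by simp
  finally have QP: "Q * P = el" .
  show ?thesis using P1 Q1 PQ QP by blast
qed

lemma iso_left:
  fixes ej el P Q :: 'a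
  assumes P1: "P = ej * P * el" and Q1: "Q = el * Q * ej" and PQ: "P * Q = ej" and QP: "Q * P = el"
    and ejj: "ej * ej = ej" and ell: "el * el = el"
  shows "left_modules_iso sc (left_ideal_gen ej) (left_ideal_gen el)"
proof -
  have ejP: "ej * P = P" using P1 ejj by (metis mult.assoc)
  have Pel: "P * el = P" using P1 ell by (metis mult.assoc)
  have elQ: "el * Q = Q" using Q1 ell by (metis mult.assoc)
  have Qej: "Q * ej = Q" using Q1 ejj by (metis mult.assoc)
  let ?A = "left_ideal_gen ej" and ?B = "left_ideal_gen el"
  have fA: "y * P \<in> ?B" if yA: "y \<in> ?A" for y
  proof -
    obtain a where "y = a * ej" using yA unfolding left_ideal_gen_def by blast
    then have "y * P = (a * P) * el" using ejP Pel by (simp add: mult.assoc)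
    then show ?thesis unfolding left_ideal_gen_def by blast
  qed
  have gB: "z * Q \<in> ?A" if zB: "z \<in> ?B" for z
  proof -
    obtain a where "z = a * el" using zB unfolding left_ideal_gen_def by blast
    then have "z * Q = (a * Q) * ej" using elQ Qej by (simp add: mult.assoc)
    then show ?thesis unfolding left_ideal_gen_def by blast
  qed
  have gf: "y * P * Q = y" if yA: "y \<in> ?A" for y
  proof -
    obtain a where "y = a * ej" using yA unfolding left_ideal_gen_def by blast
    then show ?thesis using PQ ejj by (simp add: mult.assoc)
  qed
  have fg: "z * Q * P = z" if zB: "z \<in> ?B" for z
  proof -
    obtain a where "z = a * el" using zB unfolding left_ideal_gen_def by blast
    then show ?thesis using QP ell by (simp add: mult.assoc)
  qed
  have "bij_betw (\<lambda>y. y * P) ?A ?B"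
    by (rule bij_betw_byWitness[where f' = "\<lambda>z. z * Q"]) (use fA gB gf fg in auto)
  moreover have "\<forall>x\<in>?A. \<forall>y\<in>?A. (x + y) * P = x * P + y * P" by (simp add: distrib_right)
  moreover have "\<forall>a. \<forall>x\<in>?A. (a * x) * P = a * (x * P)" by (simp add: mult.assoc)
  moreover have "\<forall>c. \<forall>x\<in>?A. sc c x * P = sc c (x * P)" by (simp add: sc_mult1)
  ultimately show ?thesis unfolding left_modules_iso_def by blast
qed

lemma span_lmul:
  assumes G: "\<forall>g\<in>G. a * g \<in> vs.span G" and y: "y \<in> vs.span G"
  shows "a * y \<in> vs.span G"
  using y
proof (induction rule: vs.span_induct_alt)
  case base then show ?case by (simp add: vs.span_zero)
next
  case (step c g y)
  have "a * (sc c g + y) = sc c (a * g) + a * y" by (simp add: distrib_left sc_mult2)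
  moreover have "sc c (a * g) \<in> vs.span G" using G step(1) by (simp add: vs.span_scale)
  ultimately show ?case using step(2) by (simp add: vs.span_add)
qed

lemma span_rmul:
  assumes G: "\<forall>g\<in>G. g * a \<in> vs.span G" and y: "y \<in> vs.span G"
  shows "y * a \<in> vs.span G"
  using y
proof (induction rule: vs.span_induct_alt)
  case base then show ?case by (simp add: vs.span_zero)
next
  case (step c g y)
  have "(sc c g + y) * a = sc c (g * a) + y * a" by (simp add: distrib_right sc_mult1)
  moreover have "sc c (g * a) \<in> vs.span G" using G step(1) by (simp add: vs.span_scale)
  ultimately show ?case using step(2) by (simp add: vs.span_add)
qed

lemma span_PL: "y \<in> vs.span {a * x * b | a b. True} \<Longrightarrow> \<exists>as. y \<in> PL x as"
proof -
  assume y: "y \<in> vs.span {a * x * b | a b. True}"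
  let ?U = "{p. \<exists>as. p \<in> PL x as}"
  have "vs.subspace ?U" unfolding vs.subspace_def
  proof (intro conjI ballI allI)
    show "0 \<in> ?U" using PL_0[of x "[]"] by blast
    fix p q assume "p \<in> ?U" "q \<in> ?U"
    then obtain as bs where "p \<in> PL x as" "q \<in> PL x bs" by blast
    then have "p + q \<in> PL x (as @ bs)" by (rule PL_app)
    then show "p + q \<in> ?U" by blast
  next
    fix c p assume "p \<in> ?U"
    then obtain as where "p \<in> PL x as" by blast
    then have "p * sc c 1 \<in> PL x as" by (rule PL_mul)
    then show "sc c p \<in> ?U" using scr[of c p] by auto
  qed
  moreover have "{a * x * b | a b. True} \<subseteq> ?U"
  proof
    fix z assume "z \<in> {a * x * b | a b. True}"
    then obtain a b where "z = a * x * b" by blast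
    then have "z = a * x * b + 0" by simp
    moreover have "0 \<in> PL x []" by simp
    ultimately have "z \<in> PL x [a]" by auto
    then show "z \<in> ?U" by blast
  qed
  ultimately have "vs.span {a * x * b | a b. True} \<subseteq> ?U" by (rule vs.span_minimal[rotated])
  then show ?thesis using y by blast
qed

lemma pl_rep:
  assumes mn: "minright n"
  shows "n \<in> PL x as \<Longrightarrow> \<exists>d b. n = d * x * b"
proof (induction as)
  case Nil then show ?case using mn by (simp add: minright_def)
next
  case (Cons a as)
  from Cons.prems obtain t0 p0 where n: "n = a * x * t0 + p0" "p0 \<in> PL x as" by auto
  show ?case
  proof (cases "\<exists>s. n * s \<in> PL x as \<and> n * s \<noteq> 0")
    case True
    then obtain s where s: "n * s \<in> PL x as" "n * s \<noteq> 0" by blast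
    then obtain b where b: "n * s * b = n" using mn unfolding minright_def by blast
    have "n * s * b \<in> PL x as" using PL_mul[OF s(1)] .
    then have "n \<in> PL x as" using b by simp
    then show ?thesis using Cons.IH by blast
  next
    case False
    then have "\<forall>s. n * s \<in> PL x as \<longrightarrow> n * s = 0" by blast
    moreover have "\<forall>p\<in>PL x as. \<forall>q\<in>PL x as. p + q \<in> PL x as" using PL_add by blast
    moreover have "\<forall>p\<in>PL x as. \<forall>b. p * b \<in> PL x as" using PL_mul by blast
    ultimately obtain c where c: "c * n = n" "\<forall>p\<in>PL x as. c * p = 0"
      using proj[of "PL x as" n] PL_0 by blast
    have "n = c * n" using c(1) by simp
    also have "\<dots> = c * a * x * t0 + c * p0" unfolding n(1) by (simp add: distrib_left mult.assoc)
    also have "\<dots> = (c * a) * x * t0" using c(2) n(2) by simp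
    finally show ?thesis by blast
  qed
qed

lemma minright_simple:
  assumes mx: "minright x"
  shows "simple_subbimodule sc (vs.span {a * x * b | a b. True})"
proof -
  let ?G = "{a * x * b | a b. True}"
  let ?M = "vs.span ?G"
  have lm: "c * y \<in> ?M" if "y \<in> ?M" for c y
  proof (rule span_lmul[OF _ that], intro ballI)
    fix g assume "g \<in> ?G"
    then obtain a b where "g = a * x * b" by blast
    then have "c * g = (c * a) * x * b" by (simp add: mult.assoc)
    then show "c * g \<in> ?M" by (intro vs.span_base) blast
  qed
  have rm: "y * c \<in> ?M" if "y \<in> ?M" for c y
  proof (rule span_rmul[OF _ that], intro ballI)
    fix g assume "g \<in> ?G"
    then obtain a b where "g = a * x * b" by blast
    then have "g * c = a * x * (b * c)" by (simp add: mult.assoc)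
    then show "g * c \<in> ?M" by (intro vs.span_base) blast
  qed
  have sub: "subbimodule sc ?M" unfolding subbimodule_def
    using lm rm by (simp add: vs.span_zero vs.span_add vs.span_scale)
  have x0: "x \<noteq> 0" using mx unfolding minright_def by simp
  have xM: "x \<in> ?M"
  proof -
    have "x = 1 * x * 1" by simp
    then have "x \<in> ?G" by blast
    then show ?thesis by (rule vs.span_base)
  qed
  have ne: "?M \<noteq> {0}" using xM x0 by blast
  have "N = {0} \<or> N = ?M" if N: "subbimodule sc N" "N \<subseteq> ?M" for N
  proof (cases "N = {0}")
    case True then show ?thesis by simp
  next
    case False
    have N0: "0 \<in> N" and Nadd: "\<forall>p\<in>N. \<forall>q\<in>N. p + q \<in> N" and Nsc: "\<forall>c. \<forall>p\<in>N. sc c p \<in> N"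
      and Nmul: "\<forall>a. \<forall>p\<in>N. a * p \<in> N \<and> p * a \<in> N"
      using N(1) unfolding subbimodule_def by blast+
    obtain n0 where "n0 \<in> N" "n0 \<noteq> 0" using False N0 by blast
    moreover have "\<forall>p\<in>N. \<forall>a. p * a \<in> N" using Nmul by blast
    ultimately obtain n where n: "n \<in> N" "minright n" using ex_minright by blast
    have "n \<in> ?M" using n(1) N(2) by blast
    then obtain as where "n \<in> PL x as" using span_PL by blast
    then obtain d b where ndb: "n = d * x * b" using pl_rep[OF n(2)] by blast
    have n0: "n \<noteq> 0" using n(2) unfolding minright_def by simp
    have "\<forall>s. d * x * s = 0 \<longrightarrow> x * s = 0"
    proof (intro allI impI, rule ccontr)
      fix s assume dxs: "d * x * s = 0" and xs: "x * s \<noteq> 0"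
      then obtain b' where "x * s * b' = x" using mx unfolding minright_def by blast
      then have "d * x = d * x * s * b'" by (simp add: mult.assoc)
      also have "\<dots> = 0" using dxs by simp
      finally have "n = 0" using ndb by simp
      then show False using n0 by simp
    qed
    then obtain c where c: "c * (d * x) = x" using ann by blast
    have "c * n = x * b" using c ndb by (simp add: mult.assoc[symmetric])
    then have xbN: "x * b \<in> N" using Nmul n(1) by metis
    have "x * b \<noteq> 0" using n0 ndb by (auto simp: mult.assoc)
    then obtain b'' where "x * b * b'' = x" using mx unfolding minright_def by blast
    then have xN: "x \<in> N" using Nmul xbN by metis
    have "?G \<subseteq> N"
    proof
      fix g assume "g \<in> ?G"
      then obtain a b where "g = a * x * b" by blast
      then show "g \<in> N" using Nmul xN by metis
    qed
    moreover have "vs.subspace N" unfolding vs.subspace_def using N0 Nadd Nsc by blast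
    ultimately have "?M \<subseteq> N" by (rule vs.span_minimal)
    then show ?thesis using N(2) by blast
  qed
  then show ?thesis unfolding simple_subbimodule_def using sub ne by blast
qed

lemma main:
  fixes e :: "nat \<Rightarrow> 'a"
  assumes cpi: "complete_primitive_idempotents e r" and bas: "basic_wrt sc e r" and i: "i \<in> {1..r}"
  shows "\<exists>j\<in>{1..r}. \<exists>x. minright x \<and> x = e j * x \<and> x * e i \<noteq> 0"
proof -
  have prim: "\<forall>j\<in>{1..r}. primitive_idempotent (e j)" and sum1: "(\<Sum>j\<in>{1..r}. e j) = 1"
    using cpi unfolding complete_primitive_idempotents_def by blast+
  have exX: "\<exists>x. minright x \<and> x = e j * x" if j: "j \<in> {1..r}" for j
  proof -
    have ej: "e j * e j = e j" "e j \<noteq> 0" using prim_idem prim j by blast+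
    let ?X = "{e j * a | a. True}"
    have "e j = e j * 1" by simp
    then have "e j \<in> ?X" by blast
    moreover have "\<forall>x\<in>?X. \<forall>a. x * a \<in> ?X"
    proof (intro ballI allI)
      fix x a assume "x \<in> ?X"
      then obtain b where "x = e j * b" by blast
      then have "x * a = e j * (b * a)" by (simp add: mult.assoc)
      then show "x * a \<in> ?X" by blast
    qed
    ultimately obtain x where x: "x \<in> ?X" "minright x" using ex_minright ej(2) by blast
    then obtain b where "x = e j * b" by blast
    then have "e j * x = x" using ej(1) by (simp add: mult.assoc[symmetric])
    then show ?thesis using x(2) by metis
  qed
  have exk: "\<exists>k\<in>{1..r}. x * e k \<noteq> 0" if x0: "x \<noteq> 0" for x
  proof (rule ccontr)
    assume "\<not> (\<exists>k\<in>{1..r}. x * e k \<noteq> 0)"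
    hence all0: "\<forall>k\<in>{1..r}. x * e k = 0" by blast
    have "x = x * (\<Sum>k\<in>{1..r}. e k)" using sum1 by simp
    also have "\<dots> = (\<Sum>k\<in>{1..r}. x * e k)" by (rule sum_distrib_left)
    also have "\<dots> = 0" using all0 by simp
    finally show False using x0 by simp
  qed
  define X where "X j = (SOME x. minright x \<and> x = e j * x)" for j
  have X: "minright (X j) \<and> X j = e j * X j" if "j \<in> {1..r}" for j
    unfolding X_def using exX[OF that] by (rule someI_ex)
  define sg where "sg j = (SOME k. k \<in> {1..r} \<and> X j * e k \<noteq> 0)" for j
  have sg: "sg j \<in> {1..r} \<and> X j * e (sg j) \<noteq> 0" if j: "j \<in> {1..r}" for j
  proof -
    have "X j \<noteq> 0" using X[OF j] unfolding minright_def by simp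
    then have "\<exists>k. k \<in> {1..r} \<and> X j * e k \<noteq> 0" using exk by blast
    then show ?thesis unfolding sg_def by (rule someI_ex)
  qed
  have "inj_on sg {1..r}"
  proof (rule inj_onI)
    fix j l assume j: "j \<in> {1..r}" and l: "l \<in> {1..r}" and eq: "sg j = sg l"
    show "j = l"
    proof (rule ccontr)
      assume jl: "j \<noteq> l"
      define k where "k = sg j"
      have k: "k \<in> {1..r}" using sg[OF j] k_def by simp
      define t where "t = X j * e k"
      define t' where "t' = X l * e k"
      have t0: "t \<noteq> 0" using sg[OF j] unfolding t_def k_def by simp
      have t'0: "t' \<noteq> 0" using sg[OF l] eq unfolding t'_def k_def by simp
      have mt: "minright t" unfolding t_def using minright_mult X[OF j] t0 t_def by blast
      have mt': "minright t'" unfolding t'_def using minright_mult X[OF l] t'0 t'_def by blast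
      have pk: "primitive_idempotent (e k)" using prim k by blast
      have pj: "primitive_idempotent (e j)" using prim j by blast
      have pl: "primitive_idempotent (e l)" using prim l by blast
      have ekk: "e k * e k = e k" using prim_idem[OF pk] by blast
      have ejj: "e j * e j = e j" using prim_idem[OF pj] by blast
      have ell: "e l * e l = e l" using prim_idem[OF pl] by blast
      have te: "t = t * e k" unfolding t_def using ekk by (simp add: mult.assoc)
      have te': "t' = t' * e k" unfolding t'_def using ekk by (simp add: mult.assoc)
      have tj: "t = e j * t" unfolding t_def using X[OF j] by (metis mult.assoc)
      have tl: "t' = e l * t'" unfolding t'_def using X[OF l] by (metis mult.assoc)
      obtain c where c: "c * t = t'" using ann topeq[OF pk te te' t0 mt'] by blast
      obtain d where d: "d * t' = t" using ann topeq[OF pk te' te t'0 mt] by blast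
      obtain P Q where PQ: "P = e j * P * e l" "Q = e l * Q * e j" "P * Q = e j" "Q * P = e l"
        using iso_from[OF pj pl t0 tj tl c d] by blast
      have "left_modules_iso sc (left_ideal_gen (e j)) (left_ideal_gen (e l))"
        using iso_left[OF PQ ejj ell] .
      then show False using bas j l jl unfolding basic_wrt_def by blast
    qed
  qed
  moreover have "sg ` {1..r} \<subseteq> {1..r}" using sg by blast
  ultimately have "sg ` {1..r} = {1..r}" by (intro endo_inj_surj) auto
  then obtain j where j: "j \<in> {1..r}" "sg j = i" using i by (metis imageE)
  then show ?thesis using X[OF j(1)] sg[OF j(1)] by metis
qed

lemma kdual_lin:
  fixes S :: "'a set" and h :: "'a \<Rightarrow> 'k"
  assumes h: "h \<in> kdual sc S" and Ssub: "vs.subspace S" and F: "finite F" "F \<subseteq> S"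
  shows "h (\<Sum>b\<in>F. sc (c b) b) = (\<Sum>b\<in>F. c b * h b)"
  using F
proof (induction F rule: finite_induct)
  case empty
  have hadd: "\<forall>x\<in>S. \<forall>y\<in>S. h (x + y) = h x + h y" using h unfolding kdual_def by blast
  have "0 \<in> S" using Ssub unfolding vs.subspace_def by blast
  then have "h (0 + 0) = h 0 + h 0" using hadd by blast
  then have "h 0 = h 0 + h 0" by (simp only: add_0_left)
  then have "h 0 = 0" by (simp only: add_cancel_right_right)
  then show ?case by simp
next
  case (insert b F)
  have hadd: "\<forall>x\<in>S. \<forall>y\<in>S. h (x + y) = h x + h y" and hsc: "\<forall>c. \<forall>x\<in>S. h (sc c x) = c * h x"
    using h unfolding kdual_def by blast+
  have bS: "b \<in> S" using insert by blast
  have scS: "sc (c b) b \<in> S" using vs.subspace_scale[OF Ssub bS] .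
  have sumS: "(\<Sum>b\<in>F. sc (c b) b) \<in> S"
    using insert(4) by (intro vs.subspace_sum[OF Ssub]) (auto intro: vs.subspace_scale[OF Ssub])
  have "h (\<Sum>b\<in>insert b F. sc (c b) b) = h (sc (c b) b + (\<Sum>b\<in>F. sc (c b) b))"
    using insert(1,2) by simp
  also have "\<dots> = h (sc (c b) b) + h (\<Sum>b\<in>F. sc (c b) b)" using hadd scS sumS by blast
  also have "\<dots> = c b * h b + (\<Sum>b\<in>F. c b * h b)" using hsc bS insert by simp
  also have "\<dots> = (\<Sum>b\<in>insert b F. c b * h b)" using insert(1,2) by simp
  finally show ?case .
qed

lemma dual_pos:
  fixes e :: "nat \<Rightarrow> 'a"
  assumes xS: "x \<in> bimodule_socle sc" and v0: "e j * x * e i \<noteq> 0"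
  shows "num_new_arrows sc e j i > 0"
proof -
  let ?S = "bimodule_socle sc"
  let ?U = "\<Union>{M. simple_subbimodule sc M}"
  have Sdef: "?S = vs.span ?U" unfolding bimodule_socle_def ..
  have Ucl: "a * g \<in> ?U \<and> g * a \<in> ?U" if gU: "g \<in> ?U" for a g
  proof -
    obtain M where M: "simple_subbimodule sc M" "g \<in> M" using gU by blast
    then have "\<forall>a. \<forall>x\<in>M. a * x \<in> M \<and> x * a \<in> M" unfolding simple_subbimodule_def subbimodule_def
      by (elim conjE)
    then have "a * g \<in> M" "g * a \<in> M" using M(2) by blast+
    then show ?thesis using M(1) by blast
  qed
  have Ul: "\<forall>g\<in>?U. a * g \<in> vs.span ?U" for a using Ucl vs.span_base by blast
  have Ur: "\<forall>g\<in>?U. g * a \<in> vs.span ?U" for a using Ucl vs.span_base by blast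
  have Smul: "e j * y * e i \<in> ?S" if yS: "y \<in> ?S" for y
  proof -
    have "e j * y \<in> ?S" unfolding Sdef
      by (rule span_lmul[OF Ul yS[unfolded Sdef]])
    then show ?thesis unfolding Sdef
      by (rule span_rmul[OF Ur])
  qed
  have Ssub: "vs.subspace ?S" unfolding Sdef by simp
  obtain Bs where Bs: "Bs \<subseteq> ?S" "vs.independent Bs" "?S \<subseteq> vs.span Bs"
    by (rule vs.basis_exists[of ?S], rule that) assumption+
  have finBs: "finite Bs" by (rule fdv.finiteI_independent[OF Bs(2)])
  have spanBs: "vs.span Bs = ?S" by (rule equalityI[OF vs.span_minimal[OF Bs(1) Ssub] Bs(3)])
  define rep where "rep y b = (if y \<in> ?S then vs.representation Bs y b else 0)" for y b
  have repK: "(\<lambda>y. rep y b) \<in> kdual sc ?S" for b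
    unfolding kdual_def
  proof (intro CollectI conjI ballI allI impI)
    fix y z assume yz: "y \<in> ?S" "z \<in> ?S"
    then have "y + z \<in> ?S" using vs.subspace_add[OF Ssub] by blast
    then show "rep (y + z) b = rep y b + rep z b" unfolding rep_def
      using yz vs.representation_add[OF Bs(2), of z y] spanBs by simp
  next
    fix c y assume y: "y \<in> ?S"
    then have "sc c y \<in> ?S" using vs.subspace_scale[OF Ssub] by blast
    then show "rep (sc c y) b = c * rep y b" unfolding rep_def
      using y vs.representation_scale[OF Bs(2), of y c] spanBs by simp
  next
    fix y assume "y \<notin> ?S"
    then show "rep y b = 0" unfolding rep_def by simp
  qed
  let ?v = "e j * x * e i"
  have vS: "?v \<in> ?S" using Smul xS .
  have "\<exists>b. vs.representation Bs ?v b \<noteq> 0"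
  proof (rule ccontr)
    assume "\<not> (\<exists>b. vs.representation Bs ?v b \<noteq> 0)"
    then have "\<forall>b. vs.representation Bs ?v b = 0" by blast
    moreover have "(\<Sum>b\<in>Bs. sc (vs.representation Bs ?v b) b) = ?v"
      using vs.sum_representation_eq[OF Bs(2) _ finBs] vS spanBs by simp
    ultimately have "?v = 0" by simp
    then show False using v0 by simp
  qed
  then obtain b where b: "vs.representation Bs ?v b \<noteq> 0" by blast
  interpret FV: vector_space "\<lambda>(c::'k) (f::'a \<Rightarrow> 'k) y. c * f y" by (rule fun_vs)
  let ?C = "corner_dual_socle sc e i j"
  define g where "g = dual_act ?S (e i) (\<lambda>y. rep y b) (e j)"
  have gC: "g \<in> ?C" unfolding corner_dual_socle_def Let_def g_def using repK by blast
  have "g x = rep ?v b" unfolding g_def dual_act_def using xS by simp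
  then have "g x \<noteq> 0" unfolding rep_def using vS b by simp
  then have g0: "g \<noteq> 0" by auto
  let ?Phi = "(\<lambda>b y. rep y b) ` Bs"
  have inspan: "h \<in> FV.span ?Phi" if hK: "h \<in> kdual sc ?S" for h
  proof -
    have hz: "\<forall>y. y \<notin> ?S \<longrightarrow> h y = 0" using hK unfolding kdual_def by blast
    have "h = (\<Sum>b\<in>Bs. (\<lambda>y. h b * rep y b))"
    proof
      fix y
      show "h y = (\<Sum>b\<in>Bs. (\<lambda>y. h b * rep y b)) y"
      proof (cases "y \<in> ?S")
        case True
        have "y = (\<Sum>b\<in>Bs. sc (vs.representation Bs y b) b)"
          using vs.sum_representation_eq[OF Bs(2) _ finBs] True spanBs by simp
        then have "h y = (\<Sum>b\<in>Bs. vs.representation Bs y b * h b)"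
          using kdual_lin[OF hK Ssub finBs Bs(1)] by metis
        also have "\<dots> = (\<Sum>b\<in>Bs. h b * rep y b)" unfolding rep_def using True by (simp add: mult.commute)
        finally show ?thesis by (simp add: sum_fun_apply2)
      next
        case False
        then show ?thesis using hz by (simp add: sum_fun_apply2 rep_def)
      qed
    qed
    also have "\<dots> \<in> FV.span ?Phi"
    proof (rule FV.span_sum)
      fix b' assume "b' \<in> Bs"
      then have "(\<lambda>y. rep y b') \<in> FV.span ?Phi" by (intro FV.span_base) blast
      then have "(\<lambda>y. h b' * (\<lambda>y. rep y b') y) \<in> FV.span ?Phi" by (rule FV.span_scale)
      then show "(\<lambda>y. h b' * rep y b') \<in> FV.span ?Phi" by simp
    qed
    finally show ?thesis .
  qed
  have Csub: "?C \<subseteq> FV.span ?Phi"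
  proof
    fix h assume "h \<in> ?C"
    then obtain f where f: "f \<in> kdual sc ?S" and hf: "h = dual_act ?S (e i) f (e j)"
      unfolding corner_dual_socle_def Let_def by blast
    have fadd: "\<forall>x\<in>?S. \<forall>y\<in>?S. f (x + y) = f x + f y" and fsc: "\<forall>c. \<forall>x\<in>?S. f (sc c x) = c * f x"
      using f unfolding kdual_def by blast+
    have "h \<in> kdual sc ?S" unfolding kdual_def hf dual_act_def
    proof (intro CollectI conjI ballI allI impI)
      fix y z assume yz: "y \<in> ?S" "z \<in> ?S"
      then have "y + z \<in> ?S" using vs.subspace_add[OF Ssub] by blast
      moreover have "e j * (y + z) * e i = e j * y * e i + e j * z * e i" by (simp add: algebra_simps)
      ultimately show "(if y + z \<in> ?S then f (e j * (y + z) * e i) else 0) =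
          (if y \<in> ?S then f (e j * y * e i) else 0) + (if z \<in> ?S then f (e j * z * e i) else 0)"
        using yz fadd Smul by simp
    next
      fix c y assume y: "y \<in> ?S"
      then have "sc c y \<in> ?S" using vs.subspace_scale[OF Ssub] by blast
      moreover have "e j * sc c y * e i = sc c (e j * y * e i)"
        by (simp only: sc_mult1[of c "e j * y" "e i"] sc_mult2[of c "e j" y])
      ultimately show "(if sc c y \<in> ?S then f (e j * sc c y * e i) else 0) =
          c * (if y \<in> ?S then f (e j * y * e i) else 0)"
        using y fsc Smul by simp
    next
      fix y assume "y \<notin> ?S"
      then show "(if y \<in> ?S then f (e j * y * e i) else 0) = 0" by simp
    qed
    then show "h \<in> FV.span ?Phi" by (rule inspan)
  qed
  obtain B where B: "B \<subseteq> ?C" "FV.independent B" "?C \<subseteq> FV.span B" "card B = FV.dim ?C"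
    using FV.basis_exists[of ?C] by blast
  have "B \<subseteq> FV.span ?Phi" using B(1) Csub by blast
  then have finB: "finite B" using FV.independent_span_bound[OF _ B(2)] finBs by blast
  have "B \<noteq> {}"
  proof
    assume "B = {}"
    then have "?C \<subseteq> {0}" using B(3) by simp
    then show False using gC g0 by blast
  qed
  then have "card B > 0" using finB by (simp add: card_gt_0_iff)
  then show ?thesis unfolding num_new_arrows_def using B(4) by simp
qed

lemma final:
  fixes e :: "nat \<Rightarrow> 'a"
  assumes cpi: "complete_primitive_idempotents e r" and bas: "basic_wrt sc e r"
  shows "\<forall>i\<in>{1..r}. \<exists>j\<in>{1..r}. num_new_arrows sc e j i > 0"
proof
  fix i assume i: "i \<in> {1..r}"
  obtain j x where j: "j \<in> {1..r}" and x: "minright x" "x = e j * x" "x * e i \<noteq> 0"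
    using main[OF cpi bas i] by blast
  let ?M = "vs.span {a * x * b | a b. True}"
  have simple: "simple_subbimodule sc ?M" by (rule minright_simple[OF x(1)])
  have "x = 1 * x * 1" by simp
  then have "x \<in> {a * x * b | a b. True}" by blast
  then have "x \<in> ?M" by (rule vs.span_base)
  then have "x \<in> \<Union>{M. simple_subbimodule sc M}" using simple by blast
  then have xS: "x \<in> bimodule_socle sc" unfolding bimodule_socle_def by (rule vs.span_base)
  have "e j * x * e i \<noteq> 0" using x(2,3) by simp
  then show "\<exists>j\<in>{1..r}. num_new_arrows sc e j i > 0" using dual_pos[OF xS] j by blast
qed

end

theorem proposition3p3:
  fixes sc :: "'k::alg_closed_field \<Rightarrow> 'a::ring_1 \<Rightarrow> 'a"
    and e :: "nat \<Rightarrow> 'a" and r :: nat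
  assumes "fd_algebra sc"
    and "complete_primitive_idempotents e r"
    and "basic_wrt sc e r"
    and "selfinjective sc"
  shows "\<forall>i\<in>{1..r}. \<exists>j\<in>{1..r}. num_new_arrows sc e j i > 0"
proof -
  interpret sialg sc using assms(1,4) by (rule sialg.intro)
  show ?thesis by (rule final[OF assms(2,3)])
qed

end
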